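(* There exist a function $g:\mathbb{N}\to\mathbb{R}$ with $g(n)=o(n)$ and, for every $n\ge 1$, an injective map from the set of Left-Leaning AVL trees with $n$ nodes to the set of finite binary strings such that every codeword has length at most $0.5912\,n+g(n)$. In words: there is an encoding of Left-Leaning AVL trees using at most $0.5912n+o(n)$ bits for Left-Leaning AVL trees with $n$ nodes.
   Context: A binary tree is a rooted tree in which every node has an (optional) left child and an (optional) right child. The height of a tree is the number of edges on a longest path from the root to a leaf; the empty tree has height $-1$. An AVL tree is a binary tree such that at every node the heights of the left and right subtrees differ by at most $1$ (empty subtrees included). A Left-Leaning AVL tree is an AVL tree in which, at every node, the height of the left subtree is at least the height of the right subtree. *)

theory Defs
  imports Main "HOL-Library.Landau_Symbols"
begin

datatype btree = Leaf | Node btree btree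

fun nodes :: "btree \<Rightarrow> nat" where
  "nodes Leaf = 0"
| "nodes (Node l r) = nodes l + nodes r + 1"

text \<open>Height in edges; the empty tree has height -1.\<close>
fun ht :: "btree \<Rightarrow> int" where
  "ht Leaf = -1"
| "ht (Node l r) = max (ht l) (ht r) + 1"

fun avl :: "btree \<Rightarrow> bool" where
  "avl Leaf = True"
| "avl (Node l r) = (\<bar>ht l - ht r\<bar> \<le> 1 \<and> avl l \<and> avl r)"

fun ll_avl :: "btree \<Rightarrow> bool" where
  "ll_avl Leaf = True"
| "ll_avl (Node l r) = (\<bar>ht l - ht r\<bar> \<le> 1 \<and> ht l \<ge> ht r \<and> ll_avl l \<and> ll_avl r)"

end

theory Submission
  imports Defs Complex_Main
begin

lemma ht_ge: "ht t \<ge> -1"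
  by (induction t) auto

lemma ht_nodes: "ht t + 1 \<le> int (nodes t)"
  by (induction t) auto

definition S :: "nat \<Rightarrow> btree set" where
  "S k = {t. ll_avl t \<and> ht t = int k - 1}"

lemma ht_Node: "ht (Node l r) \<ge> 0"
  using ht_ge[of l] by simp

lemma ht_Leaf: "ht t = -1 \<longleftrightarrow> t = Leaf"
proof (cases t)
  case (Node l r)
  then show ?thesis using ht_Node[of l r] by simp
qed simp

lemma S0: "S 0 = {Leaf}"
proof (rule set_eqI, rule iffI)
  fix t assume "t \<in> S 0"
  then have "ht t = -1" unfolding S_def by simp
  then show "t \<in> {Leaf}" using ht_Leaf[of t] by simp
next
  fix t assume "t \<in> {Leaf}"
  then show "t \<in> S 0" unfolding S_def by simp
qed

lemma S1: "S (Suc 0) = {Node Leaf Leaf}"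
proof (rule set_eqI, rule iffI)
  fix t assume t: "t \<in> S (Suc 0)"
  then have h: "ht t = 0" unfolding S_def by simp
  then have "t \<noteq> Leaf" by auto
  then obtain l r where lr: "t = Node l r" by (cases t) auto
  have "max (ht l) (ht r) = -1" using h lr by simp
  moreover have "ht l \<ge> -1" "ht r \<ge> -1" by (rule ht_ge)+
  ultimately have "ht l = -1" "ht r = -1" by (simp_all add: max_def split: if_splits)
  then have "l = Leaf" "r = Leaf" using ht_Leaf by blast+
  then show "t \<in> {Node Leaf Leaf}" using lr by simp
next
  fix t assume "t \<in> {Node Leaf Leaf}"
  then show "t \<in> S (Suc 0)" unfolding S_def by simp
qed

lemma SS: "S (Suc (Suc k)) = (\<lambda>(l,r). Node l r) ` (S (Suc k) \<times> (S (Suc k) \<union> S k))"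
proof
  show "S (Suc (Suc k)) \<subseteq> (\<lambda>(l,r). Node l r) ` (S (Suc k) \<times> (S (Suc k) \<union> S k))"
  proof
    fix t assume t: "t \<in> S (Suc (Suc k))"
    then have t1: "ll_avl t" "ht t = int k + 1" unfolding S_def by simp_all
    then have "t \<noteq> Leaf" by auto
    then obtain l r where lr: "t = Node l r" by (cases t) auto
    from t1 lr have a: "ll_avl l" "ll_avl r" "ht l \<ge> ht r" "ht l - ht r \<le> 1" "max (ht l) (ht r) = int k"
      by (auto simp: abs_le_iff)
    then have "ht l = int k" by (simp add: max_def split: if_splits)
    then have "l \<in> S (Suc k)" "r \<in> S (Suc k) \<union> S k" using a unfolding S_def by auto
    then have "(l, r) \<in> S (Suc k) \<times> (S (Suc k) \<union> S k)" by simp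
    then show "t \<in> (\<lambda>(l,r). Node l r) ` (S (Suc k) \<times> (S (Suc k) \<union> S k))"
      unfolding lr by (rule rev_image_eqI) simp
  qed
next
  show "(\<lambda>(l,r). Node l r) ` (S (Suc k) \<times> (S (Suc k) \<union> S k)) \<subseteq> S (Suc (Suc k))"
  proof
    fix t assume "t \<in> (\<lambda>(l,r). Node l r) ` (S (Suc k) \<times> (S (Suc k) \<union> S k))"
    then obtain l r where lr: "t = Node l r" and l: "l \<in> S (Suc k)" and r: "r \<in> S (Suc k) \<union> S k"
      by auto
    from l have l1: "ll_avl l" "ht l = int k" unfolding S_def by simp_all
    from r have r1: "ll_avl r" "ht r = int k \<or> ht r = int k - 1" unfolding S_def by auto
    have "ll_avl t" using l1 r1 lr by auto
    moreover have "ht t = int (Suc (Suc k)) - 1" using l1 r1 lr by auto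
    ultimately show "t \<in> S (Suc (Suc k))" unfolding S_def by simp
  qed
qed

lemma finS: "finite (S k) \<and> finite (S (Suc k))"
  by (induction k) (auto simp: S0 S1 SS)

lemma disjS: "S (Suc k) \<inter> S k = {}"
  unfolding S_def by auto

definition W :: "nat \<Rightarrow> real" where
  "W k = (\<Sum>t\<in>S k. (2/3) ^ nodes t)"

lemma W0: "W 0 = 1" by (simp add: W_def S0)
lemma W1: "W (Suc 0) = 2/3" by (simp add: W_def S1)

lemma Wnn: "W k \<ge> 0" unfolding W_def by (intro sum_nonneg) auto

lemma WSS: "W (Suc (Suc k)) = 2/3 * W (Suc k) * (W (Suc k) + W k)"
proof -
  have inj: "inj_on (\<lambda>(l,r). Node l r) (S (Suc k) \<times> (S (Suc k) \<union> S k))"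
    by (auto simp: inj_on_def)
  have fin: "finite (S k)" "finite (S (Suc k))" using finS by auto
  have "W (Suc (Suc k)) = (\<Sum>p\<in>S (Suc k) \<times> (S (Suc k) \<union> S k). (2/3::real) ^ nodes (case p of (l,r) \<Rightarrow> Node l r))"
    unfolding W_def SS by (subst sum.reindex[OF inj]) (simp add: comp_def)
  also have "\<dots> = (\<Sum>p\<in>S (Suc k) \<times> (S (Suc k) \<union> S k). 2/3 * ((2/3::real) ^ nodes (fst p) * (2/3) ^ nodes (snd p)))"
    by (intro sum.cong) (auto simp: power_add)
  also have "\<dots> = 2/3 * (\<Sum>l\<in>S (Suc k). \<Sum>r\<in>S (Suc k) \<union> S k. (2/3::real) ^ nodes l * (2/3) ^ nodes r)"
  proof -
    have "(\<Sum>p\<in>S (Suc k) \<times> (S (Suc k) \<union> S k). (2/3::real) ^ nodes (fst p) * (2/3) ^ nodes (snd p))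
       = (\<Sum>l\<in>S (Suc k). \<Sum>r\<in>S (Suc k) \<union> S k. (2/3::real) ^ nodes l * (2/3) ^ nodes r)"
      by (simp only: sum.cartesian_product case_prod_unfold)
    then show ?thesis by (simp only: sum_distrib_left[symmetric])
  qed
  also have "\<dots> = 2/3 * (W (Suc k) * (\<Sum>r\<in>S (Suc k) \<union> S k. (2/3::real) ^ nodes r))"
    unfolding W_def by (simp only: sum_product)
  also have "(\<Sum>r\<in>S (Suc k) \<union> S k. (2/3::real) ^ nodes r) = W (Suc k) + W k"
    unfolding W_def using fin disjS by (subst sum.union_disjoint) auto
  finally show ?thesis by simp
qed

lemma Wbound34: "W (Suc k) \<le> 3/4 \<and> W (Suc (Suc k)) \<le> 3/4"
proof (induction k)
  case 0
  have "W (Suc (Suc 0)) = 2/3 * (2/3) * (2/3 + 1)" using WSS[of 0] W0 W1 by simp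
  then show ?case using W1 by simp
next
  case (Suc k)
  let ?a = "W (Suc k)" and ?b = "W (Suc (Suc k))"
  have "W (Suc (Suc (Suc k))) = 2/3 * ?b * (?b + ?a)" by (rule WSS)
  also have "\<dots> \<le> 2/3 * (3/4) * (3/4 + 3/4)"
    using Suc Wnn[of "Suc k"] Wnn[of "Suc (Suc k)"]
    by (intro mult_mono add_mono) auto
  finally show ?case using Suc by simp
qed

lemma Wle1: "W k \<le> 1"
  using Wbound34[of "k - 1"] W0 by (cases k) auto

lemma card_Sn: "real (card {t\<in>S k. nodes t = n}) \<le> (3/2) ^ n"
proof -
  have fin: "finite (S k)" using finS by auto
  have "real (card {t\<in>S k. nodes t = n}) * (2/3) ^ n = (\<Sum>t\<in>{t\<in>S k. nodes t = n}. (2/3::real) ^ nodes t)"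
    by simp
  also have "\<dots> \<le> W k" unfolding W_def
    using fin by (intro sum_mono2) auto
  also have "\<dots> \<le> 1" by (rule Wle1)
  finally have h: "real (card {t\<in>S k. nodes t = n}) * (2/3) ^ n \<le> 1" .
  have eq: "(2/3::real) ^ n * (3/2) ^ n = 1"
    by (simp add: power_mult_distrib[symmetric])
  have "real (card {t\<in>S k. nodes t = n}) = (real (card {t\<in>S k. nodes t = n}) * (2/3) ^ n) * (3/2) ^ n"
    by (simp only: mult.assoc eq mult_1_right)
  also have "\<dots> \<le> 1 * (3/2) ^ n"
    by (rule mult_right_mono[OF h]) simp
  finally show ?thesis by simp
qed

lemma A_eq: "{t. ll_avl t \<and> nodes t = n} = (\<Union>k\<in>{..n}. {t\<in>S k. nodes t = n})"
proof
  show "{t. ll_avl t \<and> nodes t = n} \<subseteq> (\<Union>k\<in>{..n}. {t\<in>S k. nodes t = n})"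
  proof
    fix t assume t: "t \<in> {t. ll_avl t \<and> nodes t = n}"
    have "ht t + 1 \<le> int n" "ht t \<ge> -1" using ht_nodes[of t] ht_ge[of t] t by auto
    then have "nat (ht t + 1) \<in> {..n}" "t \<in> S (nat (ht t + 1))" using t unfolding S_def by auto
    then show "t \<in> (\<Union>k\<in>{..n}. {t\<in>S k. nodes t = n})" using t by auto
  qed
qed (auto simp: S_def)

lemma card_A: "finite {t. ll_avl t \<and> nodes t = n} \<and>
  real (card {t. ll_avl t \<and> nodes t = n}) \<le> (real n + 1) * (3/2) ^ n"
proof
  have fk: "finite {t\<in>S k. nodes t = n}" for k
    using finS[of k] by simp
  show "finite {t. ll_avl t \<and> nodes t = n}"
    unfolding A_eq by (intro finite_UN_I finite_atMost fk)
  have "card {t. ll_avl t \<and> nodes t = n} \<le> (\<Sum>k\<in>{..n}. card {t\<in>S k. nodes t = n})"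
    unfolding A_eq by (rule card_UN_le) (rule finite_atMost)
  then have "real (card {t. ll_avl t \<and> nodes t = n}) \<le> real (\<Sum>k\<in>{..n}. card {t\<in>S k. nodes t = n})"
    by (simp only: of_nat_le_iff)
  also have "\<dots> = (\<Sum>k\<in>{..n}. real (card {t\<in>S k. nodes t = n}))"
    by (rule of_nat_sum)
  also have "\<dots> \<le> (\<Sum>k\<in>{..n}. (3/2::real) ^ n)" by (intro sum_mono card_Sn)
  also have "\<dots> = (real n + 1) * (3/2) ^ n" by simp
  finally show "real (card {t. ll_avl t \<and> nodes t = n}) \<le> (real n + 1) * (3/2) ^ n" .
qed

lemma base: "(3/2::real) \<le> 2 powr 0.5912"
proof -
  have "(3::real)^22 \<le> 2^13 * 2^22" by simp
  then have le: "(3/2::real) ^ 22 \<le> 2 ^ 13" by (simp add: power_divide divide_le_eq)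
  have "(2 powr (13/22::real)) ^ 22 = 2 powr (real 22 * (13/22))"
    by (rule powr_power) simp
  also have "\<dots> = 2 ^ 13" by (simp add: powr_realpow[of 2 13, symmetric])
  finally have eq: "(2 powr (13/22::real)) ^ 22 = 2 ^ 13" .
  have "(3/2::real) \<le> 2 powr (13/22)"
  proof (rule ccontr)
    assume "\<not> ?thesis"
    then have "(2 powr (13/22::real)) ^ 22 < (3/2) ^ 22"
      by (intro power_strict_mono) auto
    then show False using eq le by simp
  qed
  also have "\<dots> \<le> 2 powr 0.5912" by (intro powr_mono) auto
  finally show ?thesis .
qed
lemma enc_exists:
  fixes A :: "'a set" and m :: nat
  assumes "finite A" "card A \<le> 2 ^ m"
  shows "\<exists>enc :: 'a \<Rightarrow> bool list. inj_on enc A \<and> (\<forall>t\<in>A. length (enc t) = m)"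
proof -
  have c: "card {xs :: bool list. set xs \<subseteq> UNIV \<and> length xs = m} = 2 ^ m"
    using card_lists_length_eq[of "UNIV :: bool set" m] by (simp only: card_UNIV_bool finite_UNIV)
  have f: "finite {xs :: bool list. set xs \<subseteq> UNIV \<and> length xs = m}"
    using finite_lists_length_eq[of "UNIV :: bool set" m] by (simp only: finite_UNIV simp_thms)
  obtain f where "f ` A \<subseteq> {xs :: bool list. set xs \<subseteq> UNIV \<and> length xs = m}" "inj_on f A"
    using card_le_inj[OF assms(1) f] assms(2) c by auto
  then show ?thesis by auto
qed

lemma main_bound:
  assumes "n \<ge> 1"
  shows "\<exists>enc :: btree \<Rightarrow> bool list.
        inj_on enc {t. ll_avl t \<and> nodes t = n} \<and>
        (\<forall>t \<in> {t. ll_avl t \<and> nodes t = n}.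
            real (length (enc t)) \<le> 0.5912 * real n + (log 2 (real n + 1) + 1))"
proof -
  let ?A = "{t. ll_avl t \<and> nodes t = n}"
  define x where "x = 0.5912 * real n + log 2 (real n + 1)"
  define m where "m = nat \<lceil>x\<rceil>"
  have x0: "x \<ge> 0" unfolding x_def by simp
  have xm: "x \<le> real m" unfolding m_def using x0 by linarith
  have xm1: "real m \<le> x + 1" unfolding m_def using x0 by linarith
  have finA: "finite ?A" and c1: "real (card ?A) \<le> (real n + 1) * (3/2) ^ n"
    using card_A by blast+
  have "(3/2::real) ^ n \<le> (2 powr 0.5912) ^ n"
    using base by (intro power_mono) auto
  also have "(2 powr 0.5912) ^ n = 2 powr (0.5912 * real n)"
    using powr_power[of "2::real" "0.5912" n] by (simp add: mult.commute)
  finally have p: "(3/2::real) ^ n \<le> 2 powr (0.5912 * real n)" .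
  have c2: "real (card ?A) \<le> (real n + 1) * 2 powr (0.5912 * real n)"
  proof -
    have "0 \<le> real n + 1" by simp
    from order_trans[OF c1 mult_left_mono[OF p this]] show ?thesis .
  qed
  have "2 powr x = 2 powr (0.5912 * real n) * 2 powr (log 2 (real n + 1))"
    unfolding x_def by (rule powr_add)
  also have "2 powr (log 2 (real n + 1)) = real n + 1"
    by (rule powr_log_cancel) auto
  finally have eq: "(real n + 1) * 2 powr (0.5912 * real n) = 2 powr x" by simp
  have le: "2 powr x \<le> 2 powr (real m)"
    using xm by (rule powr_mono) simp
  have pm: "(2::real) powr (real m) = 2 ^ m" by (rule powr_realpow) simp
  have h: "real (card ?A) \<le> (2::real) ^ m"
    using c2 eq le pm by linarith
  have "real ((2::nat) ^ m) = (2::real) ^ m" by simp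
  with h have "real (card ?A) \<le> real ((2::nat) ^ m)" by simp
  then have "card ?A \<le> (2::nat) ^ m" by (simp only: of_nat_le_iff)
  then obtain enc :: "btree \<Rightarrow> bool list" where e: "inj_on enc ?A" "\<forall>t\<in>?A. length (enc t) = m"
    using enc_exists[OF finA] by blast
  show ?thesis
  proof (intro exI[of _ enc] conjI ballI)
    show "inj_on enc ?A" by (rule e(1))
    fix t assume "t \<in> ?A"
    then have "length (enc t) = m" using e(2) by blast
    then show "real (length (enc t)) \<le> 0.5912 * real n + (log 2 (real n + 1) + 1)"
      using xm1 unfolding x_def by simp
  qed
qed

lemma lim_g: "(\<lambda>n::nat. (log 2 (real n + 1) + 1) / real n) \<longlonglongrightarrow> 0"
proof -
  have f: "filterlim (\<lambda>n::nat. real n + 1) at_top sequentially"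
    using filterlim_tendsto_add_at_top[OF tendsto_const filterlim_real_sequentially, of 1]
    by (simp add: add.commute)
  have A: "(\<lambda>n::nat. ln (real n + 1) / (real n + 1)) \<longlonglongrightarrow> 0"
    using filterlim_compose[OF ln_x_over_x_tendsto_0 f] by (simp add: comp_def)
  have B: "(\<lambda>n::nat. (real n + 1) / real n) \<longlonglongrightarrow> 1"
    using LIMSEQ_Suc_n_over_n[where 'a=real] by (simp add: add.commute)
  have C: "(\<lambda>n::nat. 1 / real n) \<longlonglongrightarrow> 0"
    by (rule lim_1_over_n)
  have D: "(\<lambda>n::nat. ln (real n + 1) / (real n + 1) * ((real n + 1) / real n) / ln 2 + 1 / real n) \<longlonglongrightarrow> 0 * 1 / ln 2 + 0"
    by (intro tendsto_intros A B C) simp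
  have E: "\<forall>\<^sub>F n in sequentially. ln (real n + 1) / (real n + 1) * ((real n + 1) / real n) / ln 2 + 1 / real n
      = (log 2 (real n + 1) + 1) / real n"
  proof (rule eventually_sequentiallyI[of 1])
    fix n :: nat assume "n \<ge> 1"
    then show "ln (real n + 1) / (real n + 1) * ((real n + 1) / real n) / ln 2 + 1 / real n
      = (log 2 (real n + 1) + 1) / real n"
    proof -
      have n0: "real n \<noteq> 0" "real n + 1 \<noteq> 0" using \<open>n \<ge> 1\<close> by auto
      have "ln (real n + 1) / (real n + 1) * ((real n + 1) / real n) = ln (real n + 1) / real n"
        using n0 by simp
      moreover have "ln (real n + 1) / real n / ln 2 = log 2 (real n + 1) / real n"
        by (simp add: log_def)
      ultimately show ?thesis by (simp add: add_divide_distrib)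
    qed
  qed
  show ?thesis using Lim_transform_eventually[OF D E] by simp
qed
lemma g_small: "(\<lambda>n. log 2 (real n + 1) + 1) \<in> o(\<lambda>n. real n)"
  by (rule smalloI_tendsto[OF lim_g]) (auto intro: eventually_sequentiallyI[of 1])

theorem corollary1:
  shows "\<exists>g :: nat \<Rightarrow> real. g \<in> o(\<lambda>n. real n) \<and>
    (\<forall>n \<ge> 1. \<exists>enc :: btree \<Rightarrow> bool list.
        inj_on enc {t. ll_avl t \<and> nodes t = n} \<and>
        (\<forall>t \<in> {t. ll_avl t \<and> nodes t = n}.
            real (length (enc t)) \<le> 0.5912 * real n + g n))"
  using g_small main_bound by blast

end
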